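(* Let $n\ge m\ge1$ and let $n_1,\dots,n_m$ be positive integers with $\sum_{k=1}^m n_k=n$. Then for every $t\in[0,1]$, $$\sum_{k=1}^m\sum_{i=0}^{n_k-1}\log\Bigl(1-t\frac{i}{n_k}\Bigr)-\sum_{i=0}^{n-1}\log\Bigl(1-t\frac{i}{n}\Bigr)\ge\frac{m-1}{2}\,t.$$ *)

theory Defs
  imports Complex_Main
begin

end

theory Submission
  imports Defs
begin

lemma h_mono:
  fixes t x y :: real
  assumes "0 \<le> t" "t \<le> 1" "0 \<le> x" "x \<le> y" "y < 1"
  shows "ln (1 - t*y) + t*y \<le> ln (1 - t*x) + t*x"
proof -
  have px: "0 < 1 - t*x" using assms by (smt (verit) mult_left_le_one_le mult_nonneg_nonneg)
  have py: "0 < 1 - t*y" using assms by (smt (verit) mult_left_le_one_le mult_nonneg_nonneg)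
  have txy: "t*x \<le> t*y" using assms by (simp add: mult_left_mono)
  have "ln ((1 - t*y)/(1 - t*x)) \<le> (1 - t*y)/(1 - t*x) - 1"
    using px py by (intro ln_le_minus_one) simp
  also have "\<dots> = - (t*y - t*x)/(1 - t*x)" using px by (simp add: field_simps)
  also have "\<dots> \<le> - (t*y - t*x)"
  proof -
    have d0: "0 \<le> t*y - t*x" using txy by simp
    have c1: "1 - t*x \<le> 1" using assms by simp
    have "(t*y - t*x) * (1 - t*x) \<le> (t*y - t*x)" using mult_left_le[OF c1 d0] .
    then have "(t*y - t*x) \<le> (t*y - t*x)/(1 - t*x)"
      using px by (simp add: le_divide_eq)
    moreover have "- (t*y - t*x)/(1 - t*x) = - ((t*y - t*x)/(1 - t*x))" by (rule minus_divide_left[symmetric])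
    ultimately show ?thesis by linarith
  qed
  finally have "ln ((1 - t*y)/(1 - t*x)) \<le> t*x - t*y" by simp
  moreover have "ln ((1 - t*y)/(1 - t*x)) = ln (1 - t*y) - ln (1 - t*x)"
    using px py by (simp add: ln_div)
  ultimately show ?thesis by simp
qed

lemma sum_split_nat:
  fixes a b :: nat shows "(\<Sum>k<a+b. G k) = (\<Sum>k<a. G k) + (\<Sum>j<b. G (a+j))"
  by (induction b) (simp_all add: add.assoc)

lemma gauss_real: "(\<Sum>i<N. real i) = real N * (real N - 1) / 2"
  by (induction N) (simp_all add: field_simps)

lemma sum_frac: "N > 0 \<Longrightarrow> (\<Sum>i<N. t * real i / real N) = t * (real N - 1) / 2"
proof -
  assume "N > 0"
  have "(\<Sum>i<N. t * real i / real N) = t / real N * (\<Sum>i<N. real i)"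
    by (simp add: sum_distrib_left)
  also have "\<dots> = t * (real N - 1) / 2" using \<open>N > 0\<close> by (simp add: gauss_real)
  finally show ?thesis .
qed

definition FF :: "nat \<Rightarrow> real \<Rightarrow> real" where
  "FF N t = (\<Sum>i<N. ln (1 - t * real i / real N))"

lemma two_parts:
  assumes a: "a > 0" and b: "b > 0" and t: "0 \<le> t" "t \<le> 1"
  shows "FF a t + FF b t - FF (a+b) t \<ge> t / 2"
proof -
  define h where "h x = ln (1 - t*x) + t*x" for x :: real
  define N where "N = a + b"
  define p1 where "p1 i = (i*N + a - 1) div a" for i
  define p2 where "p2 j = j*N div b + 1" for j
  define psi where "psi k = (if k < a then p1 k else p2 (k - a))" for k
  define X where "X k = (if k < a then real k / real a else real (k-a) / real b)" for k
  have p1a: "i*N \<le> p1 i * a" "p1 i * a < i*N + a" for i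
  proof -
    have "(i*N + a - 1) = p1 i * a + (i*N + a - 1) mod a" unfolding p1_def by simp
    moreover have "(i*N + a - 1) mod a < a" using a by simp
    ultimately show "i*N \<le> p1 i * a" "p1 i * a < i*N + a" using a by linarith+
  qed
  have p2b: "(p2 j - 1)*b \<le> j*N" "j*N < p2 j * b" for j
  proof -
    define q where "q = j*N div b"
    define r where "r = j*N mod b"
    have e: "j*N = q*b + r" unfolding q_def r_def by simp
    have r: "r < b" using b unfolding r_def by simp
    have pq: "p2 j = q + 1" unfolding p2_def q_def by simp
    show "(p2 j - 1)*b \<le> j*N" using e pq by simp
    show "j*N < p2 j * b" using e pq r by simp
  qed
  have p1mono: "i < i' \<Longrightarrow> p1 i < p1 i'" for i i'
  proof -
    assume "i < i'"
    then have "(i+1)*N \<le> i'*N" by (intro mult_le_mono1) simp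
    then have "i*N + a \<le> i'*N" using N_def by simp
    then have "p1 i * a < p1 i' * a" using p1a[of i] p1a[of i'] by linarith
    then show ?thesis by simp
  qed
  have p2mono: "j < j' \<Longrightarrow> p2 j < p2 j'" for j j'
  proof -
    assume "j < j'"
    then have "(j+1)*N \<le> j'*N" by (intro mult_le_mono1) simp
    then have "j*N + b \<le> j'*N" using N_def by simp
    then have "(p2 j - 1) * b < (p2 j' - 1) * b" using p2b[of j] p2b[of j'] by (simp add: algebra_simps)
    then have "p2 j - 1 < p2 j' - 1" by simp
    then show ?thesis by simp
  qed
  have disj: "p1 i \<noteq> p2 j" for i j
  proof
    assume eq: "p1 i = p2 j"
    define l where "l = p1 i"
    have l1: "l \<ge> 1" using eq unfolding l_def p2_def by simp
    have A: "i*N \<le> l*a" "l*a < i*N + a" using p1a[of i] l_def by auto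
    have B: "(l - 1)*b \<le> j*N" "j*N < l*b" using p2b[of j] eq l_def by auto
    have "(i+j)*N < l*N" using A B N_def by (simp add: algebra_simps)
    then have c1: "i + j < l" by simp
    have B1: "l*b \<le> j*N + b" using B(1) l1 by (simp add: algebra_simps)
    have "l*N < (i+j)*N + N" using A B1 N_def by (simp add: algebra_simps)
    then have "l*N < (i+j+1)*N" by (simp add: algebra_simps)
    then have "l < i + j + 1" by (rule mult_less_cancel2[THEN iffD1, THEN conjunct2])
    then show False using c1 by simp
  qed
  have p1rng: "i < a \<Longrightarrow> p1 i < N" for i
  proof -
    assume "i < a"
    then have "(i+1)*N \<le> a*N" by (intro mult_le_mono1) simp
    then have "i*N + a \<le> a*N" using N_def by simp
    then have "p1 i * a < a * N" using p1a(2)[of i] by linarith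
    then have "p1 i * a < N * a" by (simp only: mult.commute)
    then show ?thesis by (rule mult_less_cancel2[THEN iffD1, THEN conjunct2])
  qed
  have p2rng: "j < b \<Longrightarrow> p2 j < N" for j
  proof -
    assume "j < b"
    then have "j + 1 \<le> b" by simp
    then have "(j+1)*N \<le> b*N" by (rule mult_le_mono1)
    then have "j*N + N \<le> b*N" by simp
    then have "j*N + b < b*N" using N_def a by linarith
    then have "(p2 j - 1)*b + b < b * N" using p2b[of j] by linarith
    then have "p2 j * b < N * b" using p2_def by (simp add: algebra_simps)
    then show ?thesis by simp
  qed
  have Npos: "N > 0" using N_def a by simp
  have inj: "inj_on psi {..<N}"
  proof (rule inj_onI)
    fix x y assume x: "x \<in> {..<N}" and y: "y \<in> {..<N}" and e: "psi x = psi y"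
    show "x = y"
    proof (cases "x < a")
      case True
      show ?thesis
      proof (cases "y < a")
        case True
        with \<open>x<a\<close> e show ?thesis unfolding psi_def
          using p1mono[of x y] p1mono[of y x] by (cases x y rule: linorder_cases) auto
      next
        case False
        with \<open>x<a\<close> e disj show ?thesis unfolding psi_def by auto
      qed
    next
      case False
      show ?thesis
      proof (cases "y < a")
        case True
        with \<open>\<not> x<a\<close> e disj[of y "x-a"] show ?thesis unfolding psi_def by simp
      next
        case False
        with \<open>\<not> x<a\<close> e have "p2 (x-a) = p2 (y-a)" unfolding psi_def by simp
        then have "x - a = y - a"
          using p2mono[of "x-a" "y-a"] p2mono[of "y-a" "x-a"] by (cases "x-a" "y-a" rule: linorder_cases) auto
        with False \<open>\<not> x<a\<close> show ?thesis by simp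
      qed
    qed
  qed
  have rng: "psi ` {..<N} \<subseteq> {..<N}"
  proof
    fix y assume "y \<in> psi ` {..<N}"
    then obtain k where k: "k < N" "y = psi k" by auto
    show "y \<in> {..<N}"
    proof (cases "k < a")
      case True then show ?thesis using k p1rng unfolding psi_def by simp
    next
      case False then have "k - a < b" using k N_def by simp
      then show ?thesis using k p2rng False unfolding psi_def by simp
    qed
  qed
  have img: "psi ` {..<N} = {..<N}" using endo_inj_surj[OF _ rng inj] by simp
  have pw: "h (real (psi k) / real N) \<le> h (X k)" if k: "k < N" for k
    unfolding h_def
  proof (rule h_mono[OF t])
    have "psi k < N" using rng k by auto
    then show "real (psi k) / real N < 1" using Npos by simp
    show "0 \<le> X k" unfolding X_def by simp
    show "X k \<le> real (psi k) / real N"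
    proof (cases "k < a")
      case True
      have "real (k*N) \<le> real (p1 k * a)" using p1a(1)[of k] by linarith
      then have "real k * real N \<le> real (p1 k) * real a" by simp
      then show ?thesis using True a Npos unfolding X_def psi_def
        by (simp add: divide_simps mult.commute)
    next
      case False
      have "real ((k-a)*N) \<le> real (p2 (k-a) * b)" using p2b(2)[of "k-a"] by linarith
      then have "real (k-a) * real N \<le> real (p2 (k-a)) * real b" by simp
      then show ?thesis using False b Npos unfolding X_def psi_def
        by (simp add: divide_simps mult.commute)
    qed
  qed
  have "(\<Sum>l<N. h (real l / real N)) = (\<Sum>k<N. h (real (psi k) / real N))"
    using sum.reindex[OF inj, of "\<lambda>l. h (real l / real N)"] img by simp
  also have "\<dots> \<le> (\<Sum>k<N. h (X k))" by (rule sum_mono) (use pw in auto)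
  also have "\<dots> = (\<Sum>i<a. h (real i / real a)) + (\<Sum>j<b. h (real j / real b))"
    unfolding N_def sum_split_nat X_def by simp
  finally have main: "(\<Sum>l<N. h (real l / real N)) \<le>
      (\<Sum>i<a. h (real i / real a)) + (\<Sum>j<b. h (real j / real b))" .
  have hs: "(\<Sum>i<M. h (real i / real M)) = FF M t + t * (real M - 1) / 2" if "M > 0" for M
  proof -
    have "(\<Sum>i<M. h (real i / real M)) = (\<Sum>i<M. ln (1 - t * real i / real M)) + (\<Sum>i<M. t * real i / real M)"
      unfolding h_def by (simp add: sum.distrib)
    then show ?thesis using sum_frac[OF that, of t] unfolding FF_def by simp
  qed
  show ?thesis using main hs[OF a] hs[OF b] hs[OF Npos] N_def by (simp add: field_simps)
qed

lemma comb:
  fixes a b S X F Y :: real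
  assumes "a \<le> S - X" "b \<le> X + F - Y" shows "a + b \<le> S + F - Y"
  using assms by linarith

lemma induct_main:
  fixes nk :: "nat \<Rightarrow> nat" and t :: real
  assumes "0 \<le> t" and "t \<le> 1"
  shows "1 \<le> m \<longrightarrow> (\<forall>k\<in>{1..m}. nk k > 0) \<longrightarrow>
    (\<Sum>k=1..m. FF (nk k) t) - FF (\<Sum>k=1..m. nk k) t \<ge> (real m - 1) / 2 * t"
proof (induction m)
  case 0 then show ?case by simp
next
  case (Suc m)
  show ?case
  proof (intro impI)
    assume pk: "\<forall>k\<in>{1..Suc m}. nk k > 0"
    show "(\<Sum>k=1..Suc m. FF (nk k) t) - FF (\<Sum>k=1..Suc m. nk k) t \<ge> (real (Suc m) - 1) / 2 * t"
    proof (cases "m = 0")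
      case True then show ?thesis by simp
    next
      case False
      then have m1: "1 \<le> m" by simp
      have IH: "(\<Sum>k=1..m. FF (nk k) t) - FF (\<Sum>k=1..m. nk k) t \<ge> (real m - 1) / 2 * t"
        using Suc.IH m1 pk by auto
      have pos: "(\<Sum>k=1..m. nk k) > 0"
      proof -
        have "nk 1 > 0" using pk by auto
        moreover have "nk 1 \<le> (\<Sum>k=1..m. nk k)" using m1 by (intro member_le_sum) auto
        ultimately show ?thesis by simp
      qed
      have p2: "nk (Suc m) > 0" using pk by auto
      have two: "FF (\<Sum>k=1..m. nk k) t + FF (nk (Suc m)) t - FF ((\<Sum>k=1..m. nk k) + nk (Suc m)) t \<ge> t/2"
        using two_parts[OF pos p2 assms] .
      have s1: "(\<Sum>k=1..Suc m. FF (nk k) t) = (\<Sum>k=1..m. FF (nk k) t) + FF (nk (Suc m)) t"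
        by simp
      have s2: "(\<Sum>k=1..Suc m. nk k) = (\<Sum>k=1..m. nk k) + nk (Suc m)"
        by simp
      have e: "(real (Suc m) - 1)/2*t = (real m - 1)/2*t + t/2" by (simp add: field_simps)
      show ?thesis unfolding s1 s2 e by (rule comb[OF IH two])
    qed
  qed
qed

theorem lemma7p13:
  fixes n m :: nat and nk :: "nat \<Rightarrow> nat" and t :: real
  assumes "1 \<le> m" and "m \<le> n"
    and "\<And>k. k \<in> {1..m} \<Longrightarrow> nk k > 0"
    and "(\<Sum>k=1..m. nk k) = n"
    and "0 \<le> t" and "t \<le> 1"
  shows "(\<Sum>k=1..m. \<Sum>i<nk k. ln (1 - t * real i / real (nk k)))
           - (\<Sum>i<n. ln (1 - t * real i / real n))
         \<ge> (real m - 1) / 2 * t"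
proof -
  have "(\<Sum>k=1..m. FF (nk k) t) - FF (\<Sum>k=1..m. nk k) t \<ge> (real m - 1) / 2 * t"
  proof -
    have pk: "\<forall>k\<in>{1..m}. nk k > 0" using assms(3) by simp
    show ?thesis using mp[OF mp[OF induct_main[OF assms(5,6), of m nk] assms(1)] pk] .
  qed
  from this[unfolded assms(4)] show ?thesis unfolding FF_def .
qed

end
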